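(* Let $N\ge 2$ be an integer and consider the graph $G_N$ and the clustering coefficient $C(p)$ defined below. Let $p_j$ denote the $j$-th prime and $\pi(x)$ the number of primes $\le x$. Let $p\le N$ be a prime having at least one neighbour in $G_N$ other than itself. If $p\ge\sqrt N$, then $C(p)=1$. If $p\le \sqrt N$, then $$C(p)=\frac{\left[\pi(p)-1\right]\left[2\left(\pi\left(\frac{N}{p}\right)-1\right)-\pi(p)\right]+2\left[\sum_{j=\pi(p)+1}^{\pi(\sqrt N)}\left(\pi\left(\frac{N}{p_j}\right)-j\right)+\pi(\sqrt N)-1\right]}{\pi\left(\frac{N}{p}\right)\left[\pi\left(\frac{N}{p}\right)-1\right]}.$$
   Context: The graph $G_N$ has vertex set the primes $q\le N$; two distinct primes $q,q'\le N$ are adjacent iff $qq'\le N$ (i.e. some composite $\le N$ is divisible by both), and a prime $q$ carries a self-loop iff $q^2\le N$. For a prime $p\le N$, let $V(p)$ be the set of primes $q\ne p$ adjacent to $p$ and $k=|V(p)|\ge 1$. Let $L(p)$ be the number of unordered pairs of distinct elements of $V(p)$ that are adjacent, plus the number of elements of $V(p)$ carrying a self-loop. The clustering coefficient is $C(p)=L(p)\big/\tfrac{1}{2}k(k+1)$ (the maximum possible number of such links, self-loops allowed). *)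

theory Defs
  imports "HOL-Computational_Algebra.Primes" "HOL-Library.Infinite_Set" Complex_Main
begin

definition primes_pi :: "real \<Rightarrow> nat" where
  "primes_pi x = card {q :: nat. prime q \<and> real q \<le> x}"

text \<open>The j-th prime (1-indexed): nth_prime 1 = 2, nth_prime 2 = 3, ...\<close>
definition nth_prime :: "nat \<Rightarrow> nat" where
  "nth_prime j = enumerate {q :: nat. prime q} (j - 1)"

definition GN_vertices :: "nat \<Rightarrow> nat set" where
  "GN_vertices N = {q. prime q \<and> q \<le> N}"

definition GN_adj :: "nat \<Rightarrow> nat \<Rightarrow> nat \<Rightarrow> bool" where
  "GN_adj N q q' \<longleftrightarrow> q \<in> GN_vertices N \<and> q' \<in> GN_vertices N \<and> q \<noteq> q' \<and> q * q' \<le> N"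

definition GN_loop :: "nat \<Rightarrow> nat \<Rightarrow> bool" where
  "GN_loop N q \<longleftrightarrow> q \<in> GN_vertices N \<and> q * q \<le> N"

definition nbhd :: "nat \<Rightarrow> nat \<Rightarrow> nat set" where
  "nbhd N p = {q. q \<noteq> p \<and> GN_adj N p q}"

definition links :: "nat \<Rightarrow> nat \<Rightarrow> nat" where
  "links N p = card {{q, q'} | q q'. q \<in> nbhd N p \<and> q' \<in> nbhd N p \<and> q \<noteq> q' \<and> GN_adj N q q'}
             + card {q \<in> nbhd N p. GN_loop N q}"

definition clustering :: "nat \<Rightarrow> nat \<Rightarrow> real" where
  "clustering N p = real (links N p) / (real (card (nbhd N p)) * (real (card (nbhd N p)) + 1) / 2)"

end

theory Submission imports Defs begin

lemma fin_le: "finite {q::nat. prime q \<and> q \<le> n}" by auto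

lemma pi_nat: "primes_pi (real n) = card {q::nat. prime q \<and> q \<le> n}"
  unfolding primes_pi_def by simp

lemma pi_div: "p > 0 \<Longrightarrow> primes_pi (real N / real p) = card {q::nat. prime q \<and> q * p \<le> N}"
  unfolding primes_pi_def
proof -
  assume "p > 0"
  have "real q \<le> real N / real p \<longleftrightarrow> q * p \<le> N" for q
    using \<open>p>0\<close> by (simp add: pos_le_divide_eq flip: of_nat_mult)
  then show "card {q. prime q \<and> real q \<le> real N / real p} = card {q. prime q \<and> q * p \<le> N}" by simp
qed

lemma pi_sqrt: "primes_pi (sqrt (real N)) = card {q::nat. prime q \<and> q * q \<le> N}"
  unfolding primes_pi_def
proof -
  have "real q \<le> sqrt (real N) \<longleftrightarrow> q * q \<le> N" for q
  proof -
    have "real q = sqrt (real (q * q))" by simp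
    then have "real q \<le> sqrt (real N) \<longleftrightarrow> sqrt (real (q * q)) \<le> sqrt (real N)" by simp
    also have "\<dots> \<longleftrightarrow> q * q \<le> N" by (simp only: real_sqrt_le_iff of_nat_le_iff)
    finally show ?thesis .
  qed
  then show "card {q. prime q \<and> real q \<le> sqrt (real N)} = card {q. prime q \<and> q * q \<le> N}" by simp
qed

abbreviation "PR \<equiv> {q::nat. prime q}"

lemma infPR: "infinite PR" using primes_infinite by simp

lemma e_set: "{q::nat. prime q \<and> q \<le> enumerate PR n} = enumerate PR ` {..n}"
proof
  show "{q. prime q \<and> q \<le> enumerate PR n} \<subseteq> enumerate PR ` {..n}"
  proof
    fix q assume "q \<in> {q. prime q \<and> q \<le> enumerate PR n}"
    then obtain i where "enumerate PR i = q" "q \<le> enumerate PR n"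
      using enumerate_Ex[OF infPR] by auto
    then show "q \<in> enumerate PR ` {..n}" using infPR by auto
  qed
  show "enumerate PR ` {..n} \<subseteq> {q. prime q \<and> q \<le> enumerate PR n}"
    using infPR enumerate_in_set[OF infPR] by auto
qed

lemma e_card: "card {q::nat. prime q \<and> q \<le> enumerate PR n} = Suc n"
  unfolding e_set by (subst card_image) (auto intro: inj_on_subset[OF inj_enumerate[OF infPR]])

lemma nth_prime_prime: "prime (nth_prime j)"
  unfolding nth_prime_def using enumerate_in_set[OF infPR] by auto

lemma nth_prime_pi: "j \<ge> 1 \<Longrightarrow> card {q. prime q \<and> q \<le> nth_prime j} = j"
  unfolding nth_prime_def using e_card[of "j-1"] by simp

lemma prime_is_nth: assumes "prime q" shows "nth_prime (card {r. prime r \<and> r \<le> q}) = q"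
proof -
  obtain i where i: "enumerate PR i = q" using enumerate_Ex[OF infPR] assms by auto
  have "card {r. prime r \<and> r \<le> q} = Suc i" using e_card[of i] i by simp
  then show ?thesis unfolding nth_prime_def using i by simp
qed

lemma pairs_card:
  fixes A :: "nat set" assumes "finite A"
  shows "2 * card {(x,y). x \<in> A \<and> y \<in> A \<and> x < y} + card A = card A * card A"
proof -
  let ?L = "{(x,y). x \<in> A \<and> y \<in> A \<and> x < y}"
  let ?U = "{(x,y). x \<in> A \<and> y \<in> A \<and> y < x}"
  let ?D = "{(x,y). x \<in> A \<and> y \<in> A \<and> x = y}"
  have AA: "A \<times> A = ?L \<union> ?U \<union> ?D" by auto
  have f: "finite ?L" "finite ?U" "finite ?D"
    by (rule finite_subset[of _ "A \<times> A"], auto simp: assms)+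
  have "card (A \<times> A) = card ?L + card ?U + card ?D"
    unfolding AA using f by (subst card_Un_disjoint, auto)+
  moreover have "card ?U = card ?L"
  proof -
    have "?U = (\<lambda>(x,y). (y,x)) ` ?L" by auto
    moreover have "inj_on (\<lambda>(x,y). (y,x)) ?L" by (auto simp: inj_on_def)
    ultimately show ?thesis by (simp add: card_image)
  qed
  moreover have "card ?D = card A"
  proof -
    have "?D = (\<lambda>x. (x,x)) ` A" by auto
    moreover have "inj_on (\<lambda>x. (x,x)) A" by (auto simp: inj_on_def)
    ultimately show ?thesis by (simp add: card_image)
  qed
  ultimately show ?thesis by (simp add: card_cartesian_product)
qed


lemma nbhd_eq: assumes "prime p"
  shows "nbhd N p = {q. prime q \<and> q \<noteq> p \<and> p * q \<le> N}"
proof -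
  have p1: "p \<ge> 1" using assms prime_ge_1_nat by blast
  have "p * q \<le> N \<Longrightarrow> q \<le> N" for q using p1
    by (metis mult_le_mono1 mult_1 order_trans)
  moreover have "p * q \<le> N \<Longrightarrow> p \<le> N" if "prime q" for q using that
    by (metis dual_order.trans le_square mult_le_mono2 prime_ge_1_nat mult.right_neutral)
  ultimately show ?thesis unfolding nbhd_def GN_adj_def GN_vertices_def using assms by auto
qed

lemma links_eq: assumes "prime p"
  shows "links N p = card {(q,q'). q \<in> nbhd N p \<and> q' \<in> nbhd N p \<and> q < q' \<and> q * q' \<le> N}
     + card {q \<in> nbhd N p. q * q \<le> N}"
proof -
  let ?V = "nbhd N p"
  let ?O = "{(q,q'). q \<in> ?V \<and> q' \<in> ?V \<and> q < q' \<and> q * q' \<le> N}"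
  have Vv: "q \<in> ?V \<Longrightarrow> q \<in> GN_vertices N" for q
    unfolding nbhd_def GN_adj_def by auto
  have E: "{{q, q'} | q q'. q \<in> ?V \<and> q' \<in> ?V \<and> q \<noteq> q' \<and> GN_adj N q q'}
       = (\<lambda>(q,q'). {q,q'}) ` ?O"
  proof
    show "{{q, q'} | q q'. q \<in> ?V \<and> q' \<in> ?V \<and> q \<noteq> q' \<and> GN_adj N q q'} \<subseteq> (\<lambda>(q,q'). {q,q'}) ` ?O"
    proof
      fix x assume "x \<in> {{q, q'} | q q'. q \<in> ?V \<and> q' \<in> ?V \<and> q \<noteq> q' \<and> GN_adj N q q'}"
      then obtain q q' where x: "x = {q,q'}" "q \<in> ?V" "q' \<in> ?V" "q \<noteq> q'" "q * q' \<le> N"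
        unfolding GN_adj_def by auto
      show "x \<in> (\<lambda>(q,q'). {q,q'}) ` ?O"
      proof (cases "q < q'")
        case True
        then have "(q,q') \<in> ?O" using x by simp
        then show ?thesis using x(1) by (intro image_eqI[of _ _ "(q,q')"]) simp_all
      next
        case False then have "q' < q" using x by simp
        then have "(q',q) \<in> ?O" using x by (simp add: mult.commute)
        moreover have "x = {q',q}" using x(1) by blast
        ultimately show ?thesis by (intro image_eqI[of _ _ "(q',q)"]) simp_all
      qed
    qed
    show "(\<lambda>(q,q'). {q,q'}) ` ?O \<subseteq> {{q, q'} | q q'. q \<in> ?V \<and> q' \<in> ?V \<and> q \<noteq> q' \<and> GN_adj N q q'}"
    proof
      fix x assume "x \<in> (\<lambda>(q,q'). {q,q'}) ` ?O"
      then obtain y where y: "y \<in> ?O" "x = (\<lambda>(q,q'). {q,q'}) y" by blast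
      obtain q q' where "y = (q,q')" by (cases y)
      then have x: "x = {q,q'}" "(q,q') \<in> ?O" using y by simp_all
      then have "q \<in> ?V" "q' \<in> ?V" "q \<noteq> q'" "GN_adj N q q'"
        using Vv[of q] Vv[of q'] unfolding GN_adj_def by auto
      then show "x \<in> {{q, q'} | q q'. q \<in> ?V \<and> q' \<in> ?V \<and> q \<noteq> q' \<and> GN_adj N q q'}"
        using x(1) by blast
    qed
  qed
  have inj: "inj_on (\<lambda>(q,q'). {q,q'}) ?O"
    by (auto simp: inj_on_def doubleton_eq_iff)
  have L: "{q \<in> ?V. GN_loop N q} = {q \<in> ?V. q * q \<le> N}"
    using Vv unfolding GN_loop_def by auto
  show ?thesis unfolding links_def E L using inj by (simp add: card_image)
qed


lemma case1:
  fixes N p :: nat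
  assumes "prime p" and "N \<le> p * p" and k1: "card (nbhd N p) \<ge> 1"
  shows "clustering N p = 1"
proof -
  let ?V = "nbhd N p"
  have V: "?V = {q. prime q \<and> q \<noteq> p \<and> p * q \<le> N}" using nbhd_eq[OF assms(1)] .
  have finV: "finite ?V" using k1 card.infinite by fastforce
  have qp: "q \<le> p" if "q \<in> ?V" for q
  proof -
    have "p * q \<le> N" using that V by auto
    then have h: "p * q \<le> p * p" using assms(2) by (rule order_trans)
    have "p > 0" using assms(1) prime_gt_0_nat by blast
    then show ?thesis using h mult_le_cancel1[of p q p] by presburger
  qed
  have O: "{(q,q'). q \<in> ?V \<and> q' \<in> ?V \<and> q < q' \<and> q * q' \<le> N} = {(q,q'). q \<in> ?V \<and> q' \<in> ?V \<and> q < q'}"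
  proof -
    have "q * q' \<le> N" if "q \<in> ?V" "q' \<in> ?V" for q q'
    proof -
      have "q * q' \<le> p * q'" using qp[OF that(1)] by simp
      also have "\<dots> \<le> N" using that(2) V by auto
      finally show ?thesis .
    qed
    then show ?thesis by auto
  qed
  have L: "{q \<in> ?V. q * q \<le> N} = ?V"
  proof -
    have "q * q \<le> N" if "q \<in> ?V" for q
    proof -
      have "q * q \<le> p * q" using qp[OF that] by simp
      also have "\<dots> \<le> N" using that V by auto
      finally show ?thesis .
    qed
    then show ?thesis by auto
  qed
  have "links N p = card {(q,q'). q \<in> ?V \<and> q' \<in> ?V \<and> q < q'} + card ?V"
    using links_eq[OF assms(1), of N] O L by simp
  moreover have "2 * card {(q,q'). q \<in> ?V \<and> q' \<in> ?V \<and> q < q'} + card ?V = card ?V * card ?V"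
    using pairs_card[OF finV] .
  ultimately have "2 * links N p = card ?V * (card ?V + 1)"
    by (simp add: algebra_simps)
  then have "real (2 * links N p) = real (card ?V * (card ?V + 1))" by simp
  then have "2 * real (links N p) = real (card ?V) * (real (card ?V) + 1)" by (simp add: algebra_simps)
  then have e: "real (links N p) = real (card ?V) * (real (card ?V) + 1) / 2" by simp
  have "real (card ?V) * (real (card ?V) + 1) / 2 \<noteq> 0" using k1 by simp
  then show ?thesis unfolding clustering_def e by simp
qed


lemma le_of_mult1: "0 < (b::nat) \<Longrightarrow> a * b \<le> N \<Longrightarrow> a \<le> N"
  by (metis dual_order.trans le_add1 mult.commute mult_Suc mult_le_mono1 Suc_pred)
lemma le_of_mult2: "0 < (b::nat) \<Longrightarrow> b * a \<le> N \<Longrightarrow> a \<le> N"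
  using le_of_mult1[of b a N] by (simp add: mult.commute)

lemma card_rm1: "finite S \<Longrightarrow> x \<in> S \<Longrightarrow> real (card (S - {x})) = real (card S) - 1"
proof -
  assume a: "finite S" "x \<in> S"
  then have "card S > 0" using card_gt_0_iff by blast
  then have "card S \<ge> 1" by simp
  then show ?thesis using a by (simp add: card_Diff_singleton of_nat_diff)
qed

lemma arith_final:
  fixes L O1 cA cB S cL cV a M m :: real
  assumes "L = O1 + cA * cB + S + cL" "2 * O1 = cA^2 - cA" "cA = a - 1" "cB = M - a"
    "cL = m - 1" "cV = M - 1" "M \<ge> 2"
  shows "L / (cV * (cV + 1) / 2) = ((a - 1) * (2 * (M - 1) - a) + 2 * (S + m - 1)) / (M * (M - 1))"
proof -
  have "2 * L = (a - 1) * (2 * (M - 1) - a) + 2 * (S + m - 1)"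
    using assms(1-5) by (simp add: algebra_simps power2_eq_square)
  moreover have "cV * (cV + 1) / 2 = M * (M - 1) / 2" unfolding assms(6) by (simp add: algebra_simps)
  moreover have "L / (M * (M - 1) / 2) = (2 * L) / (M * (M - 1))"
    by (simp add: divide_divide_eq_right mult.commute)
  ultimately show ?thesis by simp
qed

lemma case2:
  fixes N p :: nat
  assumes pp: "prime p" and pN: "p * p \<le> N" and k1: "card (nbhd N p) \<ge> 1"
  shows "clustering N p =
     ((real (card {q. prime q \<and> q \<le> p}) - 1) *
        (2 * (real (card {q. prime q \<and> q * p \<le> N}) - 1) - real (card {q. prime q \<and> q \<le> p}))
      + 2 * ((\<Sum>j = card {q. prime q \<and> q \<le> p} + 1 .. card {q. prime q \<and> q * q \<le> N}.
                real (card {q. prime q \<and> q * nth_prime j \<le> N}) - real j)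
             + real (card {q. prime q \<and> q * q \<le> N}) - 1))
     / (real (card {q. prime q \<and> q * p \<le> N}) * (real (card {q. prime q \<and> q * p \<le> N}) - 1))"
proof -
  define Sle where "Sle = {q::nat. prime q \<and> q \<le> p}"
  define SM where "SM = {q::nat. prime q \<and> q * p \<le> N}"
  define Sq where "Sq = {q::nat. prime q \<and> q * q \<le> N}"
  define a where "a = card Sle"
  define M where "M = card SM"
  define m where "m = card Sq"
  define V where "V = nbhd N p"
  have p0: "p > 0" using pp prime_gt_0_nat by blast
  have V_eq: "V = {q. prime q \<and> q \<noteq> p \<and> p * q \<le> N}" unfolding V_def using nbhd_eq[OF pp] .
  have finSle: "finite Sle" unfolding Sle_def by auto
  have finSM: "finite SM" unfolding SM_def
  proof (rule finite_subset[of _ "{..N}"])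
    show "{q. prime q \<and> q * p \<le> N} \<subseteq> {..N}"
    proof
      fix q assume "q \<in> {q. prime q \<and> q * p \<le> N}"
      then show "q \<in> {..N}" using p0 le_of_mult1[of p q N] by simp
    qed
  qed simp
  have finSq: "finite Sq" unfolding Sq_def
  proof (rule finite_subset[of _ "{..N}"])
    show "{q. prime q \<and> q * q \<le> N} \<subseteq> {..N}"
    proof
      fix q assume "q \<in> {q. prime q \<and> q * q \<le> N}"
      then show "q \<in> {..N}" using prime_gt_0_nat[of q] le_of_mult1[of q q N] by simp
    qed
  qed simp
  have pSle: "p \<in> Sle" unfolding Sle_def using pp by simp
  have pSM: "p \<in> SM" unfolding SM_def using pp pN by simp
  have pSq: "p \<in> Sq" unfolding Sq_def using pp pN by simp
  have SleSM: "Sle \<subseteq> SM"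
  proof
    fix q assume "q \<in> Sle"
    then have "prime q" "q * p \<le> p * p" unfolding Sle_def by auto
    then show "q \<in> SM" unfolding SM_def using order_trans[OF _ pN] by auto
  qed
  have VSM: "V = SM - {p}" unfolding V_eq SM_def by (auto simp: mult.commute)
  have cardV: "real (card V) = real M - 1"
    unfolding VSM M_def using finSM pSM by (rule card_rm1)
  have finV: "finite V" unfolding VSM using finSM by simp
  have Lset: "{q \<in> V. q * q \<le> N} = Sq - {p}"
  proof
    show "{q \<in> V. q * q \<le> N} \<subseteq> Sq - {p}" unfolding V_eq Sq_def by auto
    show "Sq - {p} \<subseteq> {q \<in> V. q * q \<le> N}"
    proof
      fix q assume q: "q \<in> Sq - {p}"
      have "p * q \<le> N"
      proof (cases "q \<le> p")
        case True
        then have "p * q \<le> p * p" by simp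
        then show ?thesis using pN by linarith
      next
        case False
        then have h: "p * q \<le> q * q" by simp
        have "q * q \<le> N" using q unfolding Sq_def by auto
        then show ?thesis using order_trans[OF h] by blast
      qed
      then show "q \<in> {q \<in> V. q * q \<le> N}" using q unfolding V_eq Sq_def by auto
    qed
  qed
  have cardL: "real (card {q \<in> V. q * q \<le> N}) = real m - 1"
    unfolding Lset m_def using finSq pSq by (rule card_rm1)
  define A where "A = Sle - {p}"
  define B where "B = SM - Sle"
  define O1 where "O1 = {(x,y). x \<in> A \<and> y \<in> A \<and> x < y}"
  define T where "T = (\<lambda>q::nat. {q'. prime q' \<and> q < q' \<and> q * q' \<le> N})"
  define Q where "Q = {q. prime q \<and> p < q \<and> q * q \<le> N}"
  define Ord where "Ord = {(q,q'). q \<in> V \<and> q' \<in> V \<and> q < q' \<and> q * q' \<le> N}"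
  have A_eq: "A = {q. prime q \<and> q < p}" unfolding A_def Sle_def by auto
  have B_eq: "B = {q. prime q \<and> p < q \<and> q * p \<le> N}" unfolding B_def Sle_def SM_def by auto
  have finA: "finite A" unfolding A_def using finSle by simp
  have finB: "finite B" unfolding B_def using finSM by simp
  have finQ: "finite Q" using finSq unfolding Q_def Sq_def by (rule rev_finite_subset) auto
  have finT: "finite (T q)" if qQ: "q \<in> Q" for q
  proof -
    have False: "q > 0" using qQ prime_gt_0_nat unfolding Q_def by auto
    show ?thesis unfolding T_def
    proof (rule finite_subset[of _ "{..N}"])
      show "{q'. prime q' \<and> q < q' \<and> q * q' \<le> N} \<subseteq> {..N}"
      proof
        fix x assume x: "x \<in> {q'. prime q' \<and> q < q' \<and> q * q' \<le> N}"
        then show "x \<in> {..N}" using False le_of_mult2[of q x N] x by simp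
      qed
    qed simp
  qed
  have cardA: "real (card A) = real a - 1"
    unfolding A_def a_def using finSle pSle by (rule card_rm1)
  have cardB: "real (card B) = real M - real a"
  proof -
    have "card (SM - Sle) = card SM - card Sle" using finSle SleSM by (rule card_Diff_subset)
    moreover have "card Sle \<le> card SM" using finSM SleSM by (rule card_mono)
    ultimately show ?thesis unfolding B_def M_def a_def by (simp add: of_nat_diff)
  qed
  have Ord_split: "Ord = O1 \<union> (A \<times> B) \<union> Sigma Q T"
  proof
    show "Ord \<subseteq> O1 \<union> (A \<times> B) \<union> Sigma Q T"
    proof
      fix z assume z: "z \<in> Ord"
      obtain q q' where zq: "z = (q,q')" by (cases z)
      have h: "prime q" "q \<noteq> p" "p * q \<le> N" "prime q'" "q' \<noteq> p" "p * q' \<le> N" "q < q'" "q * q' \<le> N"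
        using z zq unfolding Ord_def V_eq by auto
      show "z \<in> O1 \<union> (A \<times> B) \<union> Sigma Q T"
      proof (cases "q < p")
        case True
        show ?thesis
        proof (cases "q' < p")
          case True
          then show ?thesis using \<open>q < p\<close> h zq unfolding O1_def A_eq by auto
        next
          case False
          then show ?thesis using \<open>q < p\<close> h zq unfolding A_eq B_eq by (auto simp: mult.commute)
        qed
      next
        case False
        then have "p < q" using h by simp
        moreover have "q * q \<le> N" using h(7,8) by (meson less_imp_le_nat mult_le_mono2 order_trans)
        ultimately show ?thesis using h zq unfolding Q_def T_def by auto
      qed
    qed
    show "O1 \<union> (A \<times> B) \<union> Sigma Q T \<subseteq> Ord"
    proof
      fix z assume z: "z \<in> O1 \<union> (A \<times> B) \<union> Sigma Q T"
      obtain q q' where zq: "z = (q,q')" by (cases z)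
      consider (a) "z \<in> O1" | (b) "z \<in> A \<times> B" | (c) "z \<in> Sigma Q T" using z by blast
      then show "z \<in> Ord"
      proof cases
        case a
        then have h: "prime q" "q < p" "prime q'" "q' < p" "q < q'" unfolding O1_def A_eq zq by auto
        have "p * q \<le> p * p" "p * q' \<le> p * p" "q * q' \<le> p * p" using h
          by (simp_all add: mult_le_mono)
        then have "p * q \<le> N" "p * q' \<le> N" "q * q' \<le> N" using pN by linarith+
        then show ?thesis using h unfolding Ord_def V_eq zq by auto
      next
        case b
        then have h: "prime q" "q < p" "prime q'" "p < q'" "q' * p \<le> N" unfolding A_eq B_eq zq by auto
        have "p * q \<le> p * p" "q * q' \<le> p * q'" using h by simp_all
        moreover have hh: "p * q' \<le> N" using h(5) by (simp add: mult.commute)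
        ultimately have "p * q \<le> N" "p * q' \<le> N" "q * q' \<le> N" using pN by linarith+
        then show ?thesis using h unfolding Ord_def V_eq zq by auto
      next
        case c
        then have h: "prime q" "p < q" "prime q'" "q < q'" "q * q' \<le> N" unfolding Q_def T_def zq by auto
        have "p * q \<le> q * q'" "p * q' \<le> q * q'" using h by (simp_all add: mult_le_mono)
        then have "p * q \<le> N" "p * q' \<le> N" using h(5) by linarith+
        then show ?thesis using h unfolding Ord_def V_eq zq by auto
      qed
    qed
  qed
  have disj1: "O1 \<inter> (A \<times> B) = {}" unfolding O1_def A_eq B_eq by auto
  have disj2: "(O1 \<union> (A \<times> B)) \<inter> Sigma Q T = {}" unfolding O1_def A_eq B_eq Q_def by auto
  have finO1: "finite O1" unfolding O1_def by (rule finite_subset[of _ "A \<times> A"]) (auto simp: finA)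
  have finSig: "finite (Sigma Q T)" using finQ finT by (rule finite_SigmaI)
  have cardOrd: "card Ord = card O1 + card A * card B + card (Sigma Q T)"
    unfolding Ord_split using finO1 finA finB finSig disj1 disj2
    by (simp add: card_Un_disjoint card_cartesian_product)
  have cardO1: "2 * card O1 + card A = card A * card A" unfolding O1_def using pairs_card[OF finA] .
  have cardSig: "card (Sigma Q T) = (\<Sum>q\<in>Q. card (T q))" using finQ finT by (simp add: card_SigmaI)
  have Tcard: "real (card (T q)) = real (card {q'. prime q' \<and> q' * q \<le> N}) - real (card {r. prime r \<and> r \<le> q})"
    if "q \<in> Q" for q
  proof -
    have qq: "q * q \<le> N" "q > 0" using that prime_gt_0_nat unfolding Q_def by auto
    have "T q = {q'. prime q' \<and> q' * q \<le> N} - {r. prime r \<and> r \<le> q}"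
      unfolding T_def by (auto simp: mult.commute)
    moreover have sub: "{r. prime r \<and> r \<le> q} \<subseteq> {q'. prime q' \<and> q' * q \<le> N}"
    proof
      fix r assume "r \<in> {r. prime r \<and> r \<le> q}"
      then have "prime r" "r * q \<le> q * q" by auto
      then show "r \<in> {q'. prime q' \<and> q' * q \<le> N}" using qq(1) order_trans by blast
    qed
    moreover have "finite {q'. prime q' \<and> q' * q \<le> N}"
    proof (rule finite_subset[of _ "{..N}"])
      show "{q'. prime q' \<and> q' * q \<le> N} \<subseteq> {..N}"
      proof
        fix x assume x: "x \<in> {q'. prime q' \<and> q' * q \<le> N}"
        then show "x \<in> {..N}" using qq le_of_mult1[of q x N] by simp
      qed
    qed simp
    ultimately show ?thesis by (simp add: card_Diff_subset of_nat_diff card_mono)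
  qed
  have inj: "inj_on nth_prime {a+1..m}"
  proof
    fix i j assume ij: "i \<in> {a+1..m}" "j \<in> {a+1..m}" "nth_prime i = nth_prime j"
    have "i = card {q. prime q \<and> q \<le> nth_prime i}" using ij(1) nth_prime_pi[of i] by simp
    also have "\<dots> = card {q. prime q \<and> q \<le> nth_prime j}" using ij(3) by simp
    also have "\<dots> = j" using ij(2) nth_prime_pi[of j] by simp
    finally show "i = j" .
  qed
  have img: "nth_prime ` {a+1..m} = Q"
  proof
    show "nth_prime ` {a+1..m} \<subseteq> Q"
    proof
      fix x assume "x \<in> nth_prime ` {a+1..m}"
      then obtain j where j: "j \<in> {a+1..m}" "x = nth_prime j" by blast
      have px: "prime x" using j nth_prime_prime by simp
      have cx: "card {r. prime r \<and> r \<le> x} = j" using j nth_prime_pi by simp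
      have finx: "finite {r. prime r \<and> r \<le> x}" by simp
      have "p < x"
      proof (rule ccontr)
        assume "\<not> p < x"
        then have "{r. prime r \<and> r \<le> x} \<subseteq> Sle" unfolding Sle_def by auto
        then have "j \<le> a" using cx finSle unfolding a_def by (metis card_mono)
        then show False using j by simp
      qed
      moreover have "x * x \<le> N"
      proof (rule ccontr)
        assume "\<not> x * x \<le> N"
        then have "Sq \<subseteq> {r. prime r \<and> r \<le> x} - {x}"
        proof (intro subsetI)
          fix r assume nx: "\<not> x * x \<le> N" and r: "r \<in> Sq"
          then have rr: "prime r" "r * r \<le> N" unfolding Sq_def by auto
          have "r < x"
          proof (rule ccontr)
            assume "\<not> r < x"
            then have "x * x \<le> r * r" by (simp add: mult_le_mono)
            then show False using rr nx by linarith
          qed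
          then show "r \<in> {r. prime r \<and> r \<le> x} - {x}" using rr by simp
        qed
        then have "m \<le> card ({r. prime r \<and> r \<le> x} - {x})" unfolding m_def
          using finx by (metis card_mono finite_Diff)
        also have "\<dots> = j - 1" using cx px by (simp add: card_Diff_singleton)
        finally show False using j by (simp, arith)
      qed
      ultimately show "x \<in> Q" unfolding Q_def using px by simp
    qed
    show "Q \<subseteq> nth_prime ` {a+1..m}"
    proof
      fix q assume q: "q \<in> Q"
      let ?j = "card {r. prime r \<and> r \<le> q}"
      have q1: "Sle \<subseteq> {r. prime r \<and> r \<le> q}" using q unfolding Sle_def Q_def by auto
      have q2: "q \<in> {r. prime r \<and> r \<le> q}" "q \<notin> Sle" using q unfolding Sle_def Q_def by auto
      have "Sle \<subset> {r. prime r \<and> r \<le> q}" using q1 q2 by blast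
      then have "a < ?j" unfolding a_def by (simp add: psubset_card_mono)
      moreover have "{r. prime r \<and> r \<le> q} \<subseteq> Sq"
      proof
        fix r assume r: "r \<in> {r. prime r \<and> r \<le> q}"
        then have "r * r \<le> q * q" by (simp add: mult_le_mono)
        moreover have "q * q \<le> N" using q unfolding Q_def by simp
        ultimately show "r \<in> Sq" using r unfolding Sq_def by simp
      qed
      then have "?j \<le> m" unfolding m_def using finSq by (simp add: card_mono)
      ultimately have "?j \<in> {a+1..m}" by simp
      moreover have "nth_prime ?j = q" using q prime_is_nth unfolding Q_def by simp
      ultimately show "q \<in> nth_prime ` {a+1..m}" by force
    qed
  qed
  have Ssum: "(\<Sum>j = a + 1 .. m. real (card {q. prime q \<and> q * nth_prime j \<le> N}) - real j)
      = real (card (Sigma Q T))"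
  proof -
    define g where "g = (\<lambda>x. real (card {q'. prime q' \<and> q' * x \<le> N}) - real (card {r. prime r \<and> r \<le> x}))"
    have "(\<Sum>j = a + 1 .. m. real (card {q. prime q \<and> q * nth_prime j \<le> N}) - real j)
       = (\<Sum>j \<in> {a + 1 .. m}. g (nth_prime j))"
    proof (rule sum.cong)
      fix j assume j: "j \<in> {a + 1 .. m}"
      then have "j \<ge> 1" by simp
      then have "card {r. prime r \<and> r \<le> nth_prime j} = j" by (rule nth_prime_pi)
      then show "real (card {q. prime q \<and> q * nth_prime j \<le> N}) - real j = g (nth_prime j)"
        unfolding g_def by simp
    qed simp
    also have "\<dots> = sum g (nth_prime ` {a+1..m})"
      by (rule sum.reindex[OF inj, symmetric, unfolded comp_def])
    also have "\<dots> = sum g Q" unfolding img ..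
    also have "\<dots> = (\<Sum>x\<in>Q. real (card (T x)))"
      by (rule sum.cong) (simp_all add: Tcard g_def)
    also have "\<dots> = real (\<Sum>x\<in>Q. card (T x))" by simp
    finally show ?thesis using cardSig by simp
  qed
  have links: "links N p = card Ord + card {q \<in> V. q * q \<le> N}"
    unfolding Ord_def V_def using links_eq[OF pp] .
  have M2: "real M \<ge> 2" using k1 cardV unfolding V_def by simp
  have cO1: "2 * real (card O1) = (real (card A))^2 - real (card A)"
  proof -
    have "real (2 * card O1 + card A) = real (card A * card A)" using cardO1 by simp
    then show ?thesis by (simp add: power2_eq_square)
  qed
  have Lr: "real (links N p) = real (card O1) + real (card A) * real (card B) + real (card (Sigma Q T)) + real (card {q \<in> V. q * q \<le> N})"
    unfolding links cardOrd by simp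
  have "clustering N p = ((real a - 1) * (2 * (real M - 1) - real a) + 2 * (real (card (Sigma Q T)) + real m - 1)) / (real M * (real M - 1))"
    unfolding clustering_def V_def[symmetric]
    by (rule arith_final[OF Lr cO1 cardA cardB cardL cardV M2])
  then have "clustering N p = ((real a - 1) * (2 * (real M - 1) - real a) + 2 * ((\<Sum>j = a + 1 .. m. real (card {q. prime q \<and> q * nth_prime j \<le> N}) - real j) + real m - 1)) / (real M * (real M - 1))"
    unfolding Ssum .
  then show ?thesis unfolding a_def M_def m_def Sle_def SM_def Sq_def .
qed


theorem mainTheorem11:
  fixes N p :: nat
  assumes "N \<ge> 2" and "prime p" and "p \<le> N" and "card (nbhd N p) \<ge> 1"
  shows "(sqrt (real N) \<le> real p \<longrightarrow> clustering N p = 1) \<and>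
         (real p \<le> sqrt (real N) \<longrightarrow>
            clustering N p =
              ((real (primes_pi (real p)) - 1) *
                 (2 * (real (primes_pi (real N / real p)) - 1) - real (primes_pi (real p)))
               + 2 * ((\<Sum>j = primes_pi (real p) + 1 .. primes_pi (sqrt (real N)).
                         real (primes_pi (real N / real (nth_prime j))) - real j)
                      + real (primes_pi (sqrt (real N))) - 1))
              / (real (primes_pi (real N / real p)) * (real (primes_pi (real N / real p)) - 1)))"
proof (intro conjI impI)
  have p0: "p > 0" using assms(2) prime_gt_0_nat by blast
  have sp: "sqrt (real (p * p)) = real p" by simp
  {
    assume "sqrt (real N) \<le> real p"
    then have "sqrt (real N) \<le> sqrt (real (p * p))" using sp by simp
    then have "N \<le> p * p" by (simp only: real_sqrt_le_iff of_nat_le_iff)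
    then show "clustering N p = 1" using case1[OF assms(2) _ assms(4)] by simp
  }
  assume "real p \<le> sqrt (real N)"
  then have "sqrt (real (p * p)) \<le> sqrt (real N)" using sp by simp
  then have pN: "p * p \<le> N" by (simp only: real_sqrt_le_iff of_nat_le_iff)
  have s: "(\<Sum>j = primes_pi (real p) + 1 .. primes_pi (sqrt (real N)).
                         real (primes_pi (real N / real (nth_prime j))) - real j)
      = (\<Sum>j = card {q. prime q \<and> q \<le> p} + 1 .. card {q. prime q \<and> q * q \<le> N}.
                real (card {q. prime q \<and> q * nth_prime j \<le> N}) - real j)"
    unfolding pi_nat pi_sqrt
    by (rule sum.cong) (simp_all add: pi_div prime_gt_0_nat nth_prime_prime)
  show "clustering N p =
              ((real (primes_pi (real p)) - 1) *
                 (2 * (real (primes_pi (real N / real p)) - 1) - real (primes_pi (real p)))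
               + 2 * ((\<Sum>j = primes_pi (real p) + 1 .. primes_pi (sqrt (real N)).
                         real (primes_pi (real N / real (nth_prime j))) - real j)
                      + real (primes_pi (sqrt (real N))) - 1))
              / (real (primes_pi (real N / real p)) * (real (primes_pi (real N / real p)) - 1))"
    unfolding s unfolding pi_nat pi_sqrt pi_div[OF p0]
    by (rule case2[OF assms(2) pN assms(4)])
qed

end
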